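(* Let $G$ be a connected graph with $n\ge 2$ vertices and let $k$ be an integer. The following statements are equivalent: (1) there is a GS ordering of $G$ whose $\mathcal{F}$-tree has at most $k$ leaves; (2) there is a $Z^*$-forcing set of $G$ of size at most $k$; (3) there is a generic $Z$-sequence of $G$ of length at least $n-k$.
   Context: All graphs are finite, simple, undirected, connected and non-empty; $N(v)$ is the open and $N[v]=N(v)\cup\{v\}$ the closed neighborhood. A GS ordering of $G$ is an ordering $(v_1,\dots,v_n)$ of $V(G)$ such that every $v_i$ with $i>1$ has a neighbor among $v_1,\dots,v_{i-1}$. Its $\mathcal{F}$-tree is the spanning tree rooted at $v_1$ where the parent of $v_i$ ($i>1$) is its leftmost neighbor in the ordering; a leaf is a non-root vertex without children (the root is never a leaf). A generic $Z$-sequence of $G$ is a sequence $(v_1,\dots,v_\ell)$ of distinct vertices that is a prefix of some GS ordering of $G$ and satisfies $N(v_i)\setminus\bigcup_{j=1}^{i-1}N[v_j]\neq\emptyset$ for all $i\in\{1,\dots,\ell\}$. $Z^*$-rule: if $v$ is a blue vertex that has exactly one white neighbor $w$, and either $w$ is the only white vertex of $G$ or $w$ has at least one white neighbor, then $w$ may be colored blue. A set $S\subseteq V(G)$ is a $Z^*$-forcing set if, coloring $S$ blue and all other vertices white and then iteratively applying the $Z^*$-rule, all vertices of $G$ can be colored blue. *)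

theory Defs
  imports Main
begin

definition simple_graph :: "'a set \<Rightarrow> ('a \<Rightarrow> 'a \<Rightarrow> bool) \<Rightarrow> bool" where
  "simple_graph V E \<longleftrightarrow> finite V \<and> V \<noteq> {} \<and>
     (\<forall>x y. E x y \<longrightarrow> x \<in> V \<and> y \<in> V) \<and>
     (\<forall>x y. E x y \<longrightarrow> E y x) \<and> (\<forall>x. \<not> E x x)"

definition connected_graph :: "'a set \<Rightarrow> ('a \<Rightarrow> 'a \<Rightarrow> bool) \<Rightarrow> bool" where
  "connected_graph V E \<longleftrightarrow> simple_graph V E \<and> (\<forall>x\<in>V. \<forall>y\<in>V. E\<^sup>*\<^sup>* x y)"

definition nbhd :: "('a \<Rightarrow> 'a \<Rightarrow> bool) \<Rightarrow> 'a \<Rightarrow> 'a set" where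
  "nbhd E v = {u. E v u}"

definition cnbhd :: "('a \<Rightarrow> 'a \<Rightarrow> bool) \<Rightarrow> 'a \<Rightarrow> 'a set" where
  "cnbhd E v = insert v (nbhd E v)"

definition gs_ordering :: "'a set \<Rightarrow> ('a \<Rightarrow> 'a \<Rightarrow> bool) \<Rightarrow> 'a list \<Rightarrow> bool" where
  "gs_ordering V E vs \<longleftrightarrow> distinct vs \<and> set vs = V \<and>
     (\<forall>i. 0 < i \<and> i < length vs \<longrightarrow> (\<exists>j<i. E (vs ! i) (vs ! j)))"

definition ftree_parent :: "('a \<Rightarrow> 'a \<Rightarrow> bool) \<Rightarrow> 'a list \<Rightarrow> nat \<Rightarrow> nat" where
  "ftree_parent E vs m = (LEAST j. E (vs ! m) (vs ! j))"

definition ftree_leaves :: "('a \<Rightarrow> 'a \<Rightarrow> bool) \<Rightarrow> 'a list \<Rightarrow> 'a set" where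
  "ftree_leaves E vs = {vs ! i | i. 0 < i \<and> i < length vs \<and>
      \<not> (\<exists>m. 0 < m \<and> m < length vs \<and> ftree_parent E vs m = i)}"

definition generic_Z_sequence :: "'a set \<Rightarrow> ('a \<Rightarrow> 'a \<Rightarrow> bool) \<Rightarrow> 'a list \<Rightarrow> bool" where
  "generic_Z_sequence V E zs \<longleftrightarrow> distinct zs \<and>
     (\<exists>vs. gs_ordering V E vs \<and> zs = take (length zs) vs) \<and>
     (\<forall>i<length zs. nbhd E (zs ! i) - (\<Union>j<i. cnbhd E (zs ! j)) \<noteq> {})"

definition zstar_step :: "'a set \<Rightarrow> ('a \<Rightarrow> 'a \<Rightarrow> bool) \<Rightarrow> 'a set \<Rightarrow> 'a set \<Rightarrow> bool" where
  "zstar_step V E B B' \<longleftrightarrow> (\<exists>v w. v \<in> B \<and> w \<in> V - B \<and> nbhd E v \<inter> (V - B) = {w} \<and>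
       (V - B = {w} \<or> (\<exists>u. E w u \<and> u \<in> V - B)) \<and> B' = insert w B)"

definition zstar_forcing_set :: "'a set \<Rightarrow> ('a \<Rightarrow> 'a \<Rightarrow> bool) \<Rightarrow> 'a set \<Rightarrow> bool" where
  "zstar_forcing_set V E S \<longleftrightarrow> S \<subseteq> V \<and> (zstar_step V E)\<^sup>*\<^sup>* S V"

end

theory Submission
  imports Defs
begin

lemma cg_facts:
  assumes "connected_graph V E"
  shows "finite V" "V \<noteq> {}" "E x y \<Longrightarrow> x \<in> V" "E x y \<Longrightarrow> y \<in> V"
    "E x y \<Longrightarrow> E y x" "\<not> E x x" "x \<in> V \<Longrightarrow> y \<in> V \<Longrightarrow> E\<^sup>*\<^sup>* x y"
  using assms unfolding connected_graph_def simple_graph_def by auto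

definition gs_list :: "('a \<Rightarrow> 'a \<Rightarrow> bool) \<Rightarrow> 'a list \<Rightarrow> bool" where
  "gs_list E P \<longleftrightarrow> (\<forall>i. 0 < i \<and> i < length P \<longrightarrow> (\<exists>j<i. E (P ! i) (P ! j)))"

lemma gs_list_snoc:
  assumes "gs_list E P" and "P = [] \<or> (\<exists>a\<in>set P. E b a)"
  shows "gs_list E (P @ [b])"
  unfolding gs_list_def
proof (intro allI impI)
  fix i assume i: "0 < i \<and> i < length (P @ [b])"
  show "\<exists>j<i. E ((P @ [b]) ! i) ((P @ [b]) ! j)"
  proof (cases "i < length P")
    case True
    then obtain j where "j < i" "E (P ! i) (P ! j)" using assms(1) i unfolding gs_list_def by blast
    then show ?thesis using True by (intro exI[of _ j]) (auto simp: nth_append)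
  next
    case False
    then have ii: "i = length P" using i by auto
    then have "P \<noteq> []" using i by auto
    then obtain a where "a \<in> set P" "E b a" using assms(2) by auto
    then obtain j where "j < length P" "P ! j = a" by (auto simp: in_set_conv_nth)
    then show ?thesis using ii \<open>E b a\<close> by (intro exI[of _ j]) (auto simp: nth_append)
  qed
qed

lemma cut_edge:
  assumes "r\<^sup>*\<^sup>* x y" "x \<in> A" "y \<notin> A"
  shows "\<exists>a b. a \<in> A \<and> b \<notin> A \<and> r a b"
  using assms
proof (induction rule: rtranclp_induct)
  case base then show ?case by simp
next
  case (step y z)
  then show ?case by (cases "y \<in> A") auto
qed

lemma extend_gs:
  assumes cg: "connected_graph V E"
  shows "distinct P \<Longrightarrow> set P \<subseteq> V \<Longrightarrow> gs_list E P \<Longrightarrow>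
     \<exists>vs. gs_ordering V E vs \<and> take (length P) vs = P"
proof (induction "card (V - set P)" arbitrary: P rule: less_induct)
  case less
  note F = cg_facts[OF cg]
  show ?case
  proof (cases "V - set P = {}")
    case True
    then have "gs_ordering V E P" using less.prems unfolding gs_ordering_def gs_list_def by auto
    then show ?thesis by auto
  next
    case False
    have "\<exists>c\<in>V - set P. P = [] \<or> (\<exists>a\<in>set P. E c a)"
    proof (cases "P = []")
      case True then show ?thesis using False by auto
    next
      case False': False
      then obtain x where x: "x \<in> set P" by (cases P) auto
      obtain y where y: "y \<in> V - set P" using False by auto
      have "E\<^sup>*\<^sup>* x y" using F(7) x y less.prems(2) by auto
      then obtain a b where "a \<in> set P" "b \<notin> set P" "E a b" using cut_edge[of E x y "set P"] x y by auto
      then show ?thesis using F(4)[of a b] F(5)[of a b] by auto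
    qed
    then obtain c where c: "c \<in> V - set P" "P = [] \<or> (\<exists>a\<in>set P. E c a)" by blast
    let ?P = "P @ [c]"
    have "V - set ?P \<subset> V - set P" using c by auto
    then have lt: "card (V - set ?P) < card (V - set P)" using F(1) by (intro psubset_card_mono) auto
    have "distinct ?P" "set ?P \<subseteq> V" using less.prems c by auto
    moreover have "gs_list E ?P" using gs_list_snoc[OF less.prems(3) c(2)] .
    ultimately obtain vs where vs: "gs_ordering V E vs" "take (length ?P) vs = ?P"
      using less.hyps[OF lt] by blast
    have "take (length P) vs = take (length P) (take (length ?P) vs)" by simp
    also have "\<dots> = P" using vs(2) by simp
    finally show ?thesis using vs(1) by blast
  qed
qed

lemma force_list:
  assumes cg: "connected_graph V E"
  shows "(zstar_step V E)\<^sup>*\<^sup>* B V \<Longrightarrow> B \<subseteq> V \<Longrightarrow> \<exists>zs. distinct zs \<and> set zs = V - B \<and> gs_list E zs \<and>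
     (\<forall>i<length zs. nbhd E (zs ! i) - (\<Union>j<i. cnbhd E (zs ! j)) \<noteq> {})"
proof (induction rule: converse_rtranclp_induct)
  case base
  then show ?case by (intro exI[of _ "[]"]) (auto simp: gs_list_def)
next
  case (step B B')
  note F = cg_facts[OF cg]
  obtain v w where vw: "v \<in> B" "w \<in> V - B" "nbhd E v \<inter> (V - B) = {w}"
    "V - B = {w} \<or> (\<exists>u. E w u \<and> u \<in> V - B)" "B' = insert w B"
    using step.hyps(1) unfolding zstar_step_def by blast
  have "B' \<subseteq> V" using vw step.prems by auto
  then obtain zs where zs: "distinct zs" "set zs = V - B'" "gs_list E zs"
     "\<forall>i<length zs. nbhd E (zs ! i) - (\<Union>j<i. cnbhd E (zs ! j)) \<noteq> {}"
    using step.IH by blast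
  let ?z = "zs @ [w]"
  have d: "distinct ?z" using zs vw by auto
  have s: "set ?z = V - B" using zs vw by auto
  have zc: "zs = [] \<or> (\<exists>a\<in>set zs. E w a)"
  proof (cases "V - B = {w}")
    case True then have "set zs = {}" using zs vw by auto
    then show ?thesis by simp
  next
    case False
    then obtain u where "E w u" "u \<in> V - B" using vw by auto
    moreover have "u \<noteq> w" using F(6) \<open>E w u\<close> by auto
    ultimately show ?thesis using zs vw by auto
  qed
  have g: "gs_list E ?z" by (rule gs_list_snoc[OF zs(3) zc])
  have Evw: "E v w" using vw(3) unfolding nbhd_def by auto
  have n: "nbhd E (?z ! i) - (\<Union>j<i. cnbhd E (?z ! j)) \<noteq> {}" if i: "i < length ?z" for i
  proof (cases "i < length zs")
    case True
    have "(\<Union>j<i. cnbhd E (?z ! j)) = (\<Union>j<i. cnbhd E (zs ! j))"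
      using True by (intro SUP_cong refl) (simp add: nth_append)
    moreover have "?z ! i = zs ! i" using True by (simp add: nth_append)
    ultimately show ?thesis using zs(4) True by metis
  next
    case False
    then have ii: "i = length zs" using i by auto
    have "v \<in> nbhd E (?z ! i)" using ii F(5)[OF Evw] by (auto simp: nbhd_def)
    moreover have "v \<notin> cnbhd E (?z ! j)" if j: "j < i" for j
    proof
      assume a: "v \<in> cnbhd E (?z ! j)"
      let ?x = "zs ! j"
      have xz: "?z ! j = ?x" using j ii by (auto simp: nth_append)
      have jl: "j < length zs" using j ii by simp
      have xm: "?x \<in> V - B'" using nth_mem[OF jl] zs(2) by simp
      have "v \<noteq> ?x" using xm vw by auto
      then have "E ?x v" using a xz by (auto simp: cnbhd_def nbhd_def)
      then have "E v ?x" by (rule F(5))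
      then have "?x \<in> nbhd E v \<inter> (V - B)" using xm vw by (auto simp: nbhd_def)
      then have "?x = w" using vw(3) by auto
      then show False using xm vw by auto
    qed
    ultimately show ?thesis by blast
  qed
  show ?case using d s g n by blast
qed


lemma forcing_to_gen:
  assumes cg: "connected_graph V E" and zf: "zstar_forcing_set V E S"
  shows "\<exists>zs. generic_Z_sequence V E zs \<and> length zs = card V - card S"
proof -
  note F = cg_facts[OF cg]
  have SV: "S \<subseteq> V" and r: "(zstar_step V E)\<^sup>*\<^sup>* S V" using zf unfolding zstar_forcing_set_def by auto
  obtain zs where zs: "distinct zs" "set zs = V - S" "gs_list E zs"
     "\<forall>i<length zs. nbhd E (zs ! i) - (\<Union>j<i. cnbhd E (zs ! j)) \<noteq> {}"
    using force_list[OF cg r SV] by blast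
  obtain vs where vs: "gs_ordering V E vs" "take (length zs) vs = zs"
    using extend_gs[OF cg zs(1) _ zs(3)] zs(2) by auto
  have "generic_Z_sequence V E zs" unfolding generic_Z_sequence_def using zs vs by metis
  moreover have "length zs = card V - card S"
    using distinct_card[OF zs(1)] zs(2) card_Diff_subset[OF finite_subset[OF SV F(1)] SV] by simp
  ultimately show ?thesis by blast
qed

lemma gen_to_leaves:
  assumes cg: "connected_graph V E" and g: "generic_Z_sequence V E zs"
  shows "\<exists>vs. gs_ordering V E vs \<and> card (ftree_leaves E vs) + length zs \<le> card V"
proof -
  note F = cg_facts[OF cg]
  obtain vs where vs: "gs_ordering V E vs" "zs = take (length zs) vs"
    using g unfolding generic_Z_sequence_def by blast
  define l where "l = length zs"
  define n where "n = length vs"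
  have dv: "distinct vs" and sv: "set vs = V" using vs(1) unfolding gs_ordering_def by auto
  have nV: "n = card V" using distinct_card[OF dv] sv n_def by simp
  have ln: "l \<le> n" using arg_cong[OF vs(2), of length] l_def n_def by (simp add: min_def split: if_splits)
  have zsi: "zs ! i = vs ! i" if "i < l" for i using vs(2) that l_def by (metis nth_take)
  have gen: "\<forall>i<l. nbhd E (zs ! i) - (\<Union>j<i. cnbhd E (zs ! j)) \<noteq> {}"
    using g l_def unfolding generic_Z_sequence_def by blast
  have sub: "ftree_leaves E vs \<subseteq> (\<lambda>i. vs ! i) ` {l..<n}"
  proof
    fix x assume "x \<in> ftree_leaves E vs"
    then obtain i where i: "x = vs ! i" "0 < i" "i < n"
      and nc: "\<not> (\<exists>m. 0 < m \<and> m < n \<and> ftree_parent E vs m = i)"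
      unfolding ftree_leaves_def n_def by blast
    have "l \<le> i"
    proof (rule ccontr)
      assume "\<not> l \<le> i"
      then have il: "i < l" by simp
      obtain w where w: "w \<in> nbhd E (zs ! i)" "w \<notin> (\<Union>j<i. cnbhd E (zs ! j))"
        using gen il by blast
      have Eiw: "E (vs ! i) w" using w(1) zsi[OF il] by (simp add: nbhd_def)
      have nj: "w \<noteq> vs ! j \<and> \<not> E (vs ! j) w" if "j < i" for j
      proof -
        have "w \<notin> cnbhd E (zs ! j)" using w(2) that by blast
        then show ?thesis using zsi[of j] that il by (auto simp: cnbhd_def nbhd_def)
      qed
      have "w \<in> V" using F(4)[OF Eiw] .
      then obtain m where m: "m < n" "vs ! m = w" using sv n_def by (metis in_set_conv_nth)
      have par: "ftree_parent E vs m = i"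
        unfolding ftree_parent_def
      proof (rule Least_equality)
        show "E (vs ! m) (vs ! i)" using F(5)[OF Eiw] m by simp
      next
        fix j assume "E (vs ! m) (vs ! j)"
        then show "i \<le> j" using nj[of j] F(5) m by (metis not_le)
      qed
      have "\<not> m < i" using nj[of m] m by auto
      then have "0 < m" using i by simp
      then show False using nc m par by blast
    qed
    then show "x \<in> (\<lambda>i. vs ! i) ` {l..<n}" using i by auto
  qed
  have "card (ftree_leaves E vs) \<le> card ((\<lambda>i. vs ! i) ` {l..<n})"
    by (rule card_mono[OF _ sub]) simp
  also have "\<dots> \<le> card {l..<n}" by (rule card_image_le) simp
  finally have "card (ftree_leaves E vs) \<le> n - l" by simp
  then show ?thesis using vs(1) ln nV l_def by (intro exI[of _ vs]) simp
qed


lemma leaves_forcing: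
  assumes cg: "connected_graph V E" and n2: "card V \<ge> 2" and vs: "gs_ordering V E vs"
  shows "zstar_forcing_set V E (ftree_leaves E vs)"
proof -
  note F = cg_facts[OF cg]
  define n where "n = length vs"
  define par where "par = ftree_parent E vs"
  have dv: "distinct vs" and sv: "set vs = V"
    using vs unfolding gs_ordering_def by simp_all
  have gs: "\<exists>j<i. E (vs ! i) (vs ! j)" if "0 < i" "i < n" for i
    using vs that unfolding gs_ordering_def n_def by blast
  have nV: "n = card V" using distinct_card[OF dv] sv n_def by simp
  have par_lt: "par m < m \<and> E (vs ! m) (vs ! (par m)) \<and> (\<forall>j<par m. \<not> E (vs ! m) (vs ! j))"
    if m0: "0 < m" "m < n" for m
  proof -
    obtain j where j: "j < m" "E (vs ! m) (vs ! j)" using gs[OF m0] by blast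
    have "E (vs ! m) (vs ! (par m))" unfolding par_def ftree_parent_def
      using LeastI[of "\<lambda>j. E (vs ! m) (vs ! j)" j, OF j(2)] .
    moreover have "par m \<le> j" unfolding par_def ftree_parent_def
      using Least_le[of "\<lambda>j. E (vs ! m) (vs ! j)" j, OF j(2)] .
    moreover have "\<forall>j<par m. \<not> E (vs ! m) (vs ! j)"
    proof (intro allI impI)
      fix j assume "j < par m"
      then show "\<not> E (vs ! m) (vs ! j)" unfolding par_def ftree_parent_def
        using not_less_Least[of j "\<lambda>j. E (vs ! m) (vs ! j)"] by blast
    qed
    ultimately show ?thesis using j by simp
  qed
  define I where "I = {i. i < n \<and> (i = 0 \<or> (\<exists>m. 0 < m \<and> m < n \<and> par m = i))}"
  define B where "B p = (\<lambda>i. vs ! i) ` {i. i < n \<and> (i \<notin> I \<or> p \<le> i)}" for p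
  have memB: "vs ! j \<in> B p \<longleftrightarrow> (j \<notin> I \<or> p \<le> j)" if "j < n" for j p
    using that dv unfolding B_def n_def by (auto simp: nth_eq_iff_index_eq)
  have inV: "x \<in> V \<Longrightarrow> \<exists>i<n. x = vs ! i" for x using sv n_def by (metis in_set_conv_nth)
  have BV: "B p \<subseteq> V" for p using sv n_def unfolding B_def by auto
  have B0: "B 0 = V" using sv n_def unfolding B_def by (auto simp: in_set_conv_nth)
  have Bn: "B n = ftree_leaves E vs"
    unfolding B_def ftree_leaves_def I_def par_def n_def by auto
  have n1: "1 < n" using n2 nV by simp
  have step: "(zstar_step V E)\<^sup>*\<^sup>* (B p) V" if "p \<le> n" for p
    using that
  proof (induction p)
    case 0 then show ?case using B0 by simp
  next
    case (Suc p)
    then have pn: "p < n" by simp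
    have IH: "(zstar_step V E)\<^sup>*\<^sup>* (B p) V" using Suc by simp
    show ?case
    proof (cases "p \<in> I")
      case False
      have "B (Suc p) = B p" unfolding B_def using False
        by (intro image_cong refl) (auto simp: Suc_le_eq le_less)
      then show ?thesis using IH by simp
    next
      case True
      define w where "w = vs ! p"
      have memW: "x \<in> V - B (Suc p) \<longleftrightarrow> (\<exists>i. i < n \<and> i \<in> I \<and> i \<le> p \<and> x = vs ! i)" for x
      proof
        assume x: "x \<in> V - B (Suc p)"
        then obtain i where i: "i < n" "x = vs ! i" using inV by blast
        then have "\<not> (i \<notin> I \<or> Suc p \<le> i)" using memB[OF i(1), of "Suc p"] x by simp
        then show "\<exists>i. i < n \<and> i \<in> I \<and> i \<le> p \<and> x = vs ! i" using i by auto
      next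
        assume "\<exists>i. i < n \<and> i \<in> I \<and> i \<le> p \<and> x = vs ! i"
        then obtain i where i: "i < n" "i \<in> I" "i \<le> p" "x = vs ! i" by blast
        have "x \<in> V" using i(1,4) sv n_def nth_mem[of i vs] by simp
        moreover have "x \<notin> B (Suc p)" using memB[OF i(1), of "Suc p"] i by simp
        ultimately show "x \<in> V - B (Suc p)" by simp
      qed
      obtain m where m: "0 < m" "m < n" "par m = p"
      proof (cases "p = 0")
        case True
        have "par 1 < 1" using par_lt[of 1] n1 by simp
        then show ?thesis using that[of 1] n1 True by simp
      next
        case False
        then show ?thesis using True that unfolding I_def by blast
      qed
      define v where "v = vs ! m"
      have pm: "p < m" using par_lt[OF m(1,2)] m(3) by simp
      have vB: "v \<in> B (Suc p)" using memB[OF m(2)] pm v_def by simp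
      have wW: "w \<in> V - B (Suc p)" using memW True pn w_def by blast
      have Evw: "E v w" using par_lt[OF m(1,2)] m(3) v_def w_def by simp
      have nb: "nbhd E v \<inter> (V - B (Suc p)) = {w}"
      proof
        show "{w} \<subseteq> nbhd E v \<inter> (V - B (Suc p))" using wW Evw by (auto simp: nbhd_def)
      next
        show "nbhd E v \<inter> (V - B (Suc p)) \<subseteq> {w}"
        proof
          fix x assume x: "x \<in> nbhd E v \<inter> (V - B (Suc p))"
          then obtain i where i: "i < n" "i \<in> I" "i \<le> p" "x = vs ! i" using memW by blast
          have "\<not> i < p"
          proof
            assume "i < p"
            then have "\<not> E (vs ! m) (vs ! i)" using par_lt[OF m(1,2)] m(3) by blast
            moreover have "E (vs ! m) (vs ! i)" using x i v_def by (simp add: nbhd_def)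
            ultimately show False by simp
          qed
          then show "x \<in> {w}" using i w_def by simp
        qed
      qed
      have zc: "V - B (Suc p) = {w} \<or> (\<exists>u. E w u \<and> u \<in> V - B (Suc p))"
      proof (cases "p = 0")
        case True
        then have "V - B (Suc p) = {w}" using memW wW w_def by auto
        then show ?thesis by simp
      next
        case False
        define u where "u = vs ! (par p)"
        have pp: "par p < p" "E w u" using par_lt[of p] False pn u_def w_def by auto
        have "par p \<in> I" using False pn pp unfolding I_def by auto
        moreover have "par p < n" using pp pn by simp
        ultimately have "u \<in> V - B (Suc p)" unfolding memW using pp u_def
          by (intro exI[of _ "par p"]) simp
        then show ?thesis using pp by blast
      qed
      have ins: "B p = insert w (B (Suc p))"
      proof -
        have "{i. i < n \<and> (i \<notin> I \<or> p \<le> i)} = insert p {i. i < n \<and> (i \<notin> I \<or> Suc p \<le> i)}"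
          using pn True by auto
        then show ?thesis unfolding B_def w_def by simp
      qed
      have "zstar_step V E (B (Suc p)) (B p)"
        unfolding zstar_step_def using vB wW nb zc ins by blast
      then show ?thesis using IH by (rule converse_rtranclp_into_rtranclp)
    qed
  qed
  show ?thesis unfolding zstar_forcing_set_def using step[of n] Bn BV[of n] by simp
qed

theorem theorem3p10:
  fixes V :: "'a set" and E :: "'a \<Rightarrow> 'a \<Rightarrow> bool" and k :: int
  assumes "connected_graph V E" and "card V \<ge> 2"
  shows "((\<exists>vs. gs_ordering V E vs \<and> int (card (ftree_leaves E vs)) \<le> k) \<longleftrightarrow>
           (\<exists>S. zstar_forcing_set V E S \<and> int (card S) \<le> k))
       \<and> ((\<exists>S. zstar_forcing_set V E S \<and> int (card S) \<le> k) \<longleftrightarrow>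
           (\<exists>zs. generic_Z_sequence V E zs \<and> int (length zs) \<ge> int (card V) - k))"
proof -
  note F = cg_facts[OF assms(1)]
  have i12: "\<exists>S. zstar_forcing_set V E S \<and> int (card S) \<le> k"
    if "\<exists>vs. gs_ordering V E vs \<and> int (card (ftree_leaves E vs)) \<le> k"
    using that leaves_forcing[OF assms] by blast
  have i23: "\<exists>zs. generic_Z_sequence V E zs \<and> int (length zs) \<ge> int (card V) - k"
    if h: "\<exists>S. zstar_forcing_set V E S \<and> int (card S) \<le> k"
  proof -
    obtain S where S: "zstar_forcing_set V E S" "int (card S) \<le> k" using h by blast
    have SV: "S \<subseteq> V" using S unfolding zstar_forcing_set_def by simp
    have "card S \<le> card V" using card_mono[OF F(1) SV] .
    moreover obtain zs where "generic_Z_sequence V E zs" "length zs = card V - card S"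
      using forcing_to_gen[OF assms(1) S(1)] by blast
    ultimately show ?thesis using S(2) by (intro exI[of _ zs]) auto
  qed
  have i31: "\<exists>vs. gs_ordering V E vs \<and> int (card (ftree_leaves E vs)) \<le> k"
    if h: "\<exists>zs. generic_Z_sequence V E zs \<and> int (length zs) \<ge> int (card V) - k"
  proof -
    obtain zs where zs: "generic_Z_sequence V E zs" "int (length zs) \<ge> int (card V) - k"
      using h by blast
    obtain vs where "gs_ordering V E vs" "card (ftree_leaves E vs) + length zs \<le> card V"
      using gen_to_leaves[OF assms(1) zs(1)] by blast
    then show ?thesis using zs(2) by (intro exI[of _ vs]) auto
  qed
  show ?thesis using i12 i23 i31 by blast
qed

end
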